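(* Let $n_1,n_2,n_3$ be integers with $3\le n_1,n_2\le n_3$ and $3\max(n_1,n_2)\le 2n_3\le n_1n_2$. Let $W$ be any set produced by the Middle Cone Construction described below and $u=(n_1+1,n_2+1,n_3+1)$. Then $W$ is a total-dominating set of $K_{n_1}\times K_{n_2}\times K_{n_3}$, and $W\cup\{u\}$ is a total-dominating set of $K_{n_1+1}\times K_{n_2+1}\times K_{n_3+1}$.
   Context: $K_{m_1}\times K_{m_2}\times K_{m_3}$: vertices are triples $(x_1,x_2,x_3)$, $1\le x_i\le m_i$, adjacent iff they differ in every coordinate. A total-dominating set is a vertex set $D$ such that every vertex of the graph is adjacent to some vertex of $D$. Multiplicities: write $n_3=qn_1+r$, $0\le r\le n_1-1$. If $r\le n_1-r$, $(\ell_1,\dots,\ell_{n_1})$ is $(q+1,q)$ repeated $r$ times followed by $n_1-2r$ copies of $q$; if $r>n_1-r$, it is $(q+1,q)$ repeated $n_1-r$ times followed by $2r-n_1$ copies of $q+1$. Let $L_i=\sum_{j<i}\ell_j$; block $i$ is the set of columns $c$ with $L_i<c\le L_i+\ell_i$; $s_i=L_i+1$. Middle Cone Construction: $W=W^L\cup W^R$, each consisting of $n_3$ landmarks indexed by columns $c=1,\dots,n_3$. Left column $c$ in block $i$ is $(i,y^L_c,c)$; right column $c$ in block $i$ is $(i+1,y^R_c,c)$ with $n_1+1$ read as $1$. Even $n_2$, $h=n_2/2$: $y^L_c=((c-1)\bmod h)+1$, $y^R_c=h+((c-1)\bmod h)+1$. Odd $n_2$, $f=(n_2-1)/2$, $k=\#\{i:\ell_i>f\}$: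 let $S=\{s_i:\ell_i>f\}$ if $k\ge2$ and $S=\{1\}$ if $k\le1$. Set $y^L_c=n_2$ for $c\in S$ and fill the other left columns in increasing order with $1,\dots,f,1,\dots,f,\dots$; set $y^R_c=n_2$ for $c\in S+1$ and fill the other right columns in increasing order with $f+1,\dots,2f,f+1,\dots,2f,\dots$. If $k\le1$, additionally change one left landmark of the form $(x,1,z)$ with $x\notin\{1,2,n_1\}$ to $(x,n_2,z)$ (any such choice). *)

theory Defs
  imports Main
begin

type_synonym vtx = "nat \<times> nat \<times> nat"

definition vert :: "nat \<Rightarrow> nat \<Rightarrow> nat \<Rightarrow> vtx set" where
  "vert m1 m2 m3 = {(x1, x2, x3). 1 \<le> x1 \<and> x1 \<le> m1 \<and> 1 \<le> x2 \<and> x2 \<le> m2 \<and> 1 \<le> x3 \<and> x3 \<le> m3}"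

definition adj :: "vtx \<Rightarrow> vtx \<Rightarrow> bool" where
  "adj x y \<longleftrightarrow> fst x \<noteq> fst y \<and> fst (snd x) \<noteq> fst (snd y) \<and> snd (snd x) \<noteq> snd (snd y)"

definition total_dom :: "nat \<Rightarrow> nat \<Rightarrow> nat \<Rightarrow> vtx set \<Rightarrow> bool" where
  "total_dom m1 m2 m3 D \<longleftrightarrow> D \<subseteq> vert m1 m2 m3 \<and> (\<forall>v \<in> vert m1 m2 m3. \<exists>d \<in> D. adj v d)"

definition mult :: "nat \<Rightarrow> nat \<Rightarrow> nat \<Rightarrow> nat" where
  "mult n1 n3 i = (let q = n3 div n1; r = n3 mod n1 in
     if r \<le> n1 - r then (if i \<le> 2 * r \<and> odd i then q + 1 else q)
     else (if i \<le> 2 * (n1 - r) then (if odd i then q + 1 else q) else q + 1))"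

definition Lpre :: "nat \<Rightarrow> nat \<Rightarrow> nat \<Rightarrow> nat" where
  "Lpre n1 n3 i = (\<Sum>j\<in>{1..<i}. mult n1 n3 j)"

definition blk :: "nat \<Rightarrow> nat \<Rightarrow> nat \<Rightarrow> nat" where
  "blk n1 n3 c = (THE i. i \<in> {1..n1} \<and> Lpre n1 n3 i < c \<and> c \<le> Lpre n1 n3 i + mult n1 n3 i)"

definition bstart :: "nat \<Rightarrow> nat \<Rightarrow> nat \<Rightarrow> nat" where
  "bstart n1 n3 i = Lpre n1 n3 i + 1"

definition landmarks :: "nat \<Rightarrow> nat \<Rightarrow> (nat \<Rightarrow> nat) \<Rightarrow> (nat \<Rightarrow> nat) \<Rightarrow> vtx set" where
  "landmarks n1 n3 yL yR =
     (\<lambda>c. (blk n1 n3 c, yL c, c)) ` {1..n3} \<union>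
     (\<lambda>c. (blk n1 n3 c mod n1 + 1, yR c, c)) ` {1..n3}"

definition yL_even :: "nat \<Rightarrow> nat \<Rightarrow> nat" where
  "yL_even n2 c = ((c - 1) mod (n2 div 2)) + 1"

definition yR_even :: "nat \<Rightarrow> nat \<Rightarrow> nat" where
  "yR_even n2 c = n2 div 2 + ((c - 1) mod (n2 div 2)) + 1"

definition kcnt :: "nat \<Rightarrow> nat \<Rightarrow> nat \<Rightarrow> nat" where
  "kcnt n1 n2 n3 = card {i \<in> {1..n1}. mult n1 n3 i > (n2 - 1) div 2}"

definition Sset :: "nat \<Rightarrow> nat \<Rightarrow> nat \<Rightarrow> nat set" where
  "Sset n1 n2 n3 = (if kcnt n1 n2 n3 \<ge> 2
     then {bstart n1 n3 i | i. i \<in> {1..n1} \<and> mult n1 n3 i > (n2 - 1) div 2}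
     else {1})"

definition yL_odd :: "nat \<Rightarrow> nat \<Rightarrow> nat \<Rightarrow> nat \<Rightarrow> nat" where
  "yL_odd n1 n2 n3 c = (if c \<in> Sset n1 n2 n3 then n2
     else card {c' \<in> {1..<c}. c' \<notin> Sset n1 n2 n3} mod ((n2 - 1) div 2) + 1)"

definition yR_odd :: "nat \<Rightarrow> nat \<Rightarrow> nat \<Rightarrow> nat \<Rightarrow> nat" where
  "yR_odd n1 n2 n3 c = (if c \<in> (\<lambda>s. s + 1) ` Sset n1 n2 n3 then n2
     else (n2 - 1) div 2
          + card {c' \<in> {1..<c}. c' \<notin> (\<lambda>s. s + 1) ` Sset n1 n2 n3} mod ((n2 - 1) div 2) + 1)"

definition middle_cone :: "nat \<Rightarrow> nat \<Rightarrow> nat \<Rightarrow> vtx set \<Rightarrow> bool" where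
  "middle_cone n1 n2 n3 W \<longleftrightarrow>
     (if even n2 then W = landmarks n1 n3 (yL_even n2) (yR_even n2)
      else if kcnt n1 n2 n3 \<ge> 2 then W = landmarks n1 n3 (yL_odd n1 n2 n3) (yR_odd n1 n2 n3)
      else (\<exists>z \<in> {1..n3}. yL_odd n1 n2 n3 z = 1 \<and> blk n1 n3 z \<notin> {1, 2, n1} \<and>
              W = landmarks n1 n3 ((yL_odd n1 n2 n3)(z := n2)) (yR_odd n1 n2 n3)))"

end

theory Submission
  imports Defs
begin


lemma mult_ge: "0 < n1 \<Longrightarrow> n3 div n1 \<le> mult n1 n3 i"
  by (simp add: mult_def Let_def)

lemma mult_pos: "0 < n1 \<Longrightarrow> n1 \<le> n3 \<Longrightarrow> 1 \<le> mult n1 n3 i"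
proof -
  assume a: "0 < n1" "n1 \<le> n3"
  have "1 \<le> n3 div n1" using a div_le_mono[of n1 n3 n1] by simp
  then show ?thesis using mult_ge[OF a(1), of n3 i] by linarith
qed

lemma mult1: assumes "0 < n1" "n1 < n3" shows "2 \<le> mult n1 n3 1"
proof (cases "n3 mod n1 = 0")
  case True
  have e: "n3 = n1 * (n3 div n1)" using True by (metis add_0_right div_mult_mod_eq mult.commute)
  have "n3 div n1 \<ge> 2"
  proof (rule ccontr)
    assume "\<not> ?thesis"
    then have "n3 div n1 \<le> 1" by simp
    then have "n1 * (n3 div n1) \<le> n1" by (simp add: mult_le_cancel1)
    with e assms show False by linarith
  qed
  then show ?thesis using mult_ge[OF assms(1), of n3 1] by linarith
next
  case False
  have "n3 mod n1 < n1" using assms by simp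
  have "1 \<le> n3 div n1" using assms div_le_mono[of n1 n3 n1] by simp
  then show ?thesis using False assms
    by (auto simp add: mult_def Let_def)
qed

lemma Lpre_Suc: "1 \<le> i \<Longrightarrow> Lpre n1 n3 (Suc i) = Lpre n1 n3 i + mult n1 n3 i"
  by (simp add: Lpre_def)

lemma Lpre_1: "Lpre n1 n3 1 = 0" by (simp add: Lpre_def)
lemma Lpre_0: "Lpre n1 n3 0 = 0" by (simp add: Lpre_def)

lemma Lpre_mono: "i \<le> j \<Longrightarrow> Lpre n1 n3 i \<le> Lpre n1 n3 j"
  unfolding Lpre_def by (rule sum_mono2) auto

lemma Lpre_gap: "1 \<le> i \<Longrightarrow> i < j \<Longrightarrow> Lpre n1 n3 i + mult n1 n3 i \<le> Lpre n1 n3 j"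
  using Lpre_Suc[of i n1 n3] Lpre_mono[of "Suc i" j n1 n3] by simp

lemma blk_eq:
  assumes "i \<in> {1..n1}" "Lpre n1 n3 i < c" "c \<le> Lpre n1 n3 i + mult n1 n3 i"
  shows "blk n1 n3 c = i"
  unfolding blk_def
proof (rule the_equality)
  show "i \<in> {1..n1} \<and> Lpre n1 n3 i < c \<and> c \<le> Lpre n1 n3 i + mult n1 n3 i" using assms by simp
next
  fix j assume j: "j \<in> {1..n1} \<and> Lpre n1 n3 j < c \<and> c \<le> Lpre n1 n3 j + mult n1 n3 j"
  show "j = i"
  proof (rule linorder_cases[of j i])
    assume "j < i" then show ?thesis using Lpre_gap[of j i n1 n3] j assms by simp
  next
    assume "i < j" then show ?thesis using Lpre_gap[of i j n1 n3] j assms by simp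
  qed
qed

lemma oddcnt: "(\<Sum>i\<in>{1..<m+1}. if i \<le> 2*r \<and> odd i then 1 else (0::nat)) = min r ((m+1) div 2)"
proof (induction m)
  case 0 then show ?case by simp
next
  case (Suc m)
  have "(\<Sum>i\<in>{1..<Suc m+1}. if i \<le> 2*r \<and> odd i then 1 else (0::nat))
     = (\<Sum>i\<in>{1..<m+1}. if i \<le> 2*r \<and> odd i then 1 else (0::nat)) + (if Suc m \<le> 2*r \<and> odd (Suc m) then 1 else 0)"
    by simp
  also have "\<dots> = min r ((Suc m+1) div 2)"
  proof (cases "even m")
    case True then obtain k where k: "m = 2*k" by blast
    have a: "(2*k+1) div 2 = k" "(2*k+2) div 2 = k+1" by simp_all
    show ?thesis using Suc.IH unfolding k by (simp add: a)
  next
    case False then obtain k where k: "m = 2*k+1" using oddE by blast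
    have a: "(2*k+2) div 2 = k+1" "(2*k+3) div 2 = k+1" by simp_all
    show ?thesis using Suc.IH unfolding k by (simp add: a)
  qed
  finally show ?case .
qed

lemma evencnt: "(\<Sum>i\<in>{1..<m+1}. if i \<le> 2*r \<and> even i then 1 else (0::nat)) = min r ((m) div 2)"
proof (induction m)
  case 0 then show ?case by simp
next
  case (Suc m)
  have "(\<Sum>i\<in>{1..<Suc m+1}. if i \<le> 2*r \<and> even i then 1 else (0::nat))
     = (\<Sum>i\<in>{1..<m+1}. if i \<le> 2*r \<and> even i then 1 else (0::nat)) + (if Suc m \<le> 2*r \<and> even (Suc m) then 1 else 0)"
    by simp
  also have "\<dots> = min r ((Suc m) div 2)"
  proof (cases "even m")
    case True then obtain k where k: "m = 2*k" by blast
    have a: "(2*k+1) div 2 = k" "(2*k) div 2 = k" by simp_all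
    show ?thesis using Suc.IH unfolding k by (simp add: a)
  next
    case False then obtain k where k: "m = 2*k+1" using oddE by blast
    have a: "(2*k+2) div 2 = k+1" "(2*k+1) div 2 = k" by simp_all
    show ?thesis using Suc.IH unfolding k by (simp add: a)
  qed
  finally show ?case .
qed

lemma Lpre_total: assumes "0 < n1" shows "Lpre n1 n3 (n1 + 1) = n3"
proof -
  define q where "q = n3 div n1"
  define r where "r = n3 mod n1"
  have n3e: "n3 = n1 * q + r" unfolding q_def r_def by simp
  have rl: "r < n1" unfolding r_def using assms by simp
  show ?thesis
  proof (cases "r \<le> n1 - r")
    case True
    have m: "mult n1 n3 j = q + (if j \<le> 2*r \<and> odd j then 1 else 0)" for j
      using True unfolding mult_def Let_def q_def[symmetric] r_def[symmetric] by simp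
    have "Lpre n1 n3 (n1+1) = (\<Sum>j\<in>{1..<n1+1}. q + (if j \<le> 2*r \<and> odd j then 1 else 0))"
      unfolding Lpre_def using m by simp
    also have "\<dots> = (\<Sum>j\<in>{1..<n1+1}. q) + (\<Sum>j\<in>{1..<n1+1}. (if j \<le> 2*r \<and> odd j then 1 else 0))"
      by (rule sum.distrib)
    also have "\<dots> = n1 * q + min r ((n1+1) div 2)" unfolding oddcnt by simp
    also have "\<dots> = n3" using True n3e by simp
    finally show ?thesis .
  next
    case False
    define s where "s = n1 - r"
    have m: "mult n1 n3 j + (if j \<le> 2*s \<and> even j then 1 else 0) = q + 1" for j
      using False unfolding mult_def Let_def q_def[symmetric] r_def[symmetric] s_def by auto
    have "Lpre n1 n3 (n1+1) + (\<Sum>j\<in>{1..<n1+1}. (if j \<le> 2*s \<and> even j then 1 else 0))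
       = (\<Sum>j\<in>{1..<n1+1}. mult n1 n3 j + (if j \<le> 2*s \<and> even j then 1 else 0))"
      unfolding Lpre_def by (simp add: sum.distrib)
    also have "\<dots> = n1 * (q+1)" using m by simp
    finally have X: "Lpre n1 n3 (n1+1) + (\<Sum>j\<in>{1..<n1+1}. (if j \<le> 2*s \<and> even j then 1 else 0)) = n1 * (q+1)" .
    have e: "(\<Sum>j\<in>{1..<n1+1}. (if j \<le> 2*s \<and> even j then 1 else (0::nat))) = min s (n1 div 2)" by (rule evencnt)
    have "Lpre n1 n3 (n1+1) + min s (n1 div 2) = n1 * (q+1)" using X by (simp only: e)
    moreover have "min s (n1 div 2) = s" using False rl unfolding s_def by simp
    ultimately show ?thesis using n3e rl unfolding s_def by (simp add: algebra_simps)
  qed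
qed

lemma blk_exists:
  assumes "0 < n1" "c \<in> {1..n3}"
  shows "\<exists>i\<in>{1..n1}. Lpre n1 n3 i < c \<and> c \<le> Lpre n1 n3 i + mult n1 n3 i"
proof -
  have "\<exists>k\<le>n1+1. (\<forall>i<k. \<not> c \<le> Lpre n1 n3 i) \<and> c \<le> Lpre n1 n3 k"
    apply (rule ex_least_nat_le)
    using Lpre_total[OF assms(1), of n3] assms(2) Lpre_0 by auto
  then obtain k where k: "k \<le> n1+1" "\<forall>i<k. \<not> c \<le> Lpre n1 n3 i" "c \<le> Lpre n1 n3 k" by blast
  have "k \<noteq> 0"
  proof assume "k = 0" with k(3) Lpre_0[of n1 n3] assms(2) show False by simp qed
  moreover have "k \<noteq> 1"
  proof assume "k = 1" with k(3) Lpre_1[of n1 n3] assms(2) show False by simp qed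
  ultimately obtain i where i: "k = Suc i" "1 \<le> i" by (cases k) auto
  show ?thesis
    apply (rule bexI[of _ i])
    using k i Lpre_Suc[of i n1 n3] by auto
qed

lemma blk_range: "0 < n1 \<Longrightarrow> c \<in> {1..n3} \<Longrightarrow> blk n1 n3 c \<in> {1..n1}"
  using blk_exists blk_eq by metis

lemma bstart_blk:
  assumes "0 < n1" "n1 \<le> n3" "i \<in> {1..n1}"
  shows "blk n1 n3 (bstart n1 n3 i) = i \<and> bstart n1 n3 i \<in> {1..n3}"
proof -
  have "1 \<le> mult n1 n3 i" using mult_pos assms by blast
  moreover have "Lpre n1 n3 i + mult n1 n3 i \<le> n3"
    using Lpre_Suc[of i n1 n3] Lpre_mono[of "Suc i" "n1+1" n1 n3] Lpre_total[OF assms(1), of n3] assms(3) by simp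
  moreover have "blk n1 n3 (Lpre n1 n3 i + 1) = i"
    by (rule blk_eq[OF assms(3)]) (use calculation in auto)
  ultimately show ?thesis unfolding bstart_def by auto
qed

lemma second_blk:
  assumes "0 < n1" "n1 \<le> n3" "i \<in> {1..n1}" "2 \<le> mult n1 n3 i"
  shows "blk n1 n3 (bstart n1 n3 i + 1) = i \<and> bstart n1 n3 i + 1 \<in> {1..n3}"
proof -
  have "Lpre n1 n3 i + mult n1 n3 i \<le> n3"
    using Lpre_Suc[of i n1 n3] Lpre_mono[of "Suc i" "n1+1" n1 n3] Lpre_total[OF assms(1), of n3] assms(3) by simp
  moreover have "blk n1 n3 (Lpre n1 n3 i + 1 + 1) = i"
    by (rule blk_eq[OF assms(3)]) (use calculation assms in auto)
  ultimately show ?thesis unfolding bstart_def using assms(4) by auto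
qed


lemma lm_L: "c \<in> {1..n3} \<Longrightarrow> (blk n1 n3 c, yL c, c) \<in> landmarks n1 n3 yL yR"
  unfolding landmarks_def by blast
lemma lm_R: "c \<in> {1..n3} \<Longrightarrow> (blk n1 n3 c mod n1 + 1, yR c, c) \<in> landmarks n1 n3 yL yR"
  unfolding landmarks_def by blast

lemma pick3:
  assumes "x1 \<noteq> x2" "x1 \<noteq> x3" "x2 \<noteq> x3" "d1 \<noteq> d2" "d1 \<noteq> d3" "d2 \<noteq> d3"
    "y1 \<noteq> b" "y2 \<noteq> b" "y3 \<noteq> b"
  shows "\<exists>t\<in>{(x1,y1,d1),(x2,y2,d2),(x3,y3,d3)}. adj (a,b,c0) t"
  using assms unfolding adj_def by auto

lemma dom_generic:
  fixes yL yR :: "nat \<Rightarrow> nat"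
  assumes n1: "3 \<le> n1" and n13: "n1 \<le> n3" and n2: "1 \<le> n2"
  and W: "W = landmarks n1 n3 yL yR"
  and yr: "\<forall>c\<in>{1..n3}. yL c \<in> {1..n2} \<and> yR c \<in> {1..n2}"
  and cond: "\<forall>b\<in>{1..n2}.
     (\<exists>d1 d2 d3. d1 \<in> {1..n3} \<and> d2 \<in> {1..n3} \<and> d3 \<in> {1..n3} \<and>
        blk n1 n3 d1 = 1 \<and> blk n1 n3 d2 = 2 \<and> blk n1 n3 d3 = n1 \<and>
        yL d1 \<noteq> b \<and> yL d2 \<noteq> b \<and> yL d3 \<noteq> b) \<or>
     (\<exists>d1 d2 d3. d1 \<in> {1..n3} \<and> d2 \<in> {1..n3} \<and> d3 \<in> {1..n3} \<and>
        blk n1 n3 d1 = 1 \<and> blk n1 n3 d2 = 2 \<and> blk n1 n3 d3 = n1 \<and>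
        yR d1 \<noteq> b \<and> yR d2 \<noteq> b \<and> yR d3 \<noteq> b)"
  shows "total_dom n1 n2 n3 W \<and> total_dom (n1+1) (n2+1) (n3+1) (insert (n1+1,n2+1,n3+1) W)"
proof -
  have n0: "0 < n1" using n1 by simp
  have sub: "W \<subseteq> vert n1 n2 n3"
  proof
    fix w assume "w \<in> W"
    then obtain c where c: "c \<in> {1..n3}" and
      "w = (blk n1 n3 c, yL c, c) \<or> w = (blk n1 n3 c mod n1 + 1, yR c, c)"
      unfolding W landmarks_def by blast
    moreover have "blk n1 n3 c \<in> {1..n1}" using blk_range[OF n0 c] .
    moreover have "Suc (blk n1 n3 c mod n1) \<le> n1" using n0 by (simp add: Suc_leI)
    ultimately show "w \<in> vert n1 n2 n3" using yr c unfolding vert_def by auto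
  qed
  have dom: "\<exists>d\<in>W. adj v d" if v: "v \<in> vert n1 n2 n3" for v
  proof -
    obtain a b c0 where ve: "v = (a,b,c0)" by (cases v) auto
    have b: "b \<in> {1..n2}" using v unfolding ve vert_def by auto
    have n12: "1 \<noteq> n1" "2 \<noteq> n1" "(1::nat) \<noteq> 2" using n1 by auto
    from bspec[OF cond b] show ?thesis
    proof
      assume "\<exists>d1 d2 d3. d1 \<in> {1..n3} \<and> d2 \<in> {1..n3} \<and> d3 \<in> {1..n3} \<and>
        blk n1 n3 d1 = 1 \<and> blk n1 n3 d2 = 2 \<and> blk n1 n3 d3 = n1 \<and>
        yL d1 \<noteq> b \<and> yL d2 \<noteq> b \<and> yL d3 \<noteq> b"
      then obtain d1 d2 d3 where d: "d1 \<in> {1..n3}" "d2 \<in> {1..n3}" "d3 \<in> {1..n3}"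
        "blk n1 n3 d1 = 1" "blk n1 n3 d2 = 2" "blk n1 n3 d3 = n1"
        "yL d1 \<noteq> b" "yL d2 \<noteq> b" "yL d3 \<noteq> b" by blast
      have dd: "d1 \<noteq> d2" "d1 \<noteq> d3" "d2 \<noteq> d3" using d(4-6) n12 by metis+
      have "{(1,yL d1,d1),(2,yL d2,d2),(n1,yL d3,d3)} \<subseteq> W"
        using lm_L[OF d(1), of n1 yL yR] lm_L[OF d(2), of n1 yL yR] lm_L[OF d(3), of n1 yL yR] d(4-6)
        unfolding W by simp
      moreover have "\<exists>t\<in>{(1,yL d1,d1),(2,yL d2,d2),(n1,yL d3,d3)}. adj (a,b,c0) t"
        apply (rule pick3) using dd n12 d(7-9) by auto
      ultimately show ?thesis unfolding ve by blast
    next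
      assume "\<exists>d1 d2 d3. d1 \<in> {1..n3} \<and> d2 \<in> {1..n3} \<and> d3 \<in> {1..n3} \<and>
        blk n1 n3 d1 = 1 \<and> blk n1 n3 d2 = 2 \<and> blk n1 n3 d3 = n1 \<and>
        yR d1 \<noteq> b \<and> yR d2 \<noteq> b \<and> yR d3 \<noteq> b"
      then obtain d1 d2 d3 where d: "d1 \<in> {1..n3}" "d2 \<in> {1..n3}" "d3 \<in> {1..n3}"
        "blk n1 n3 d1 = 1" "blk n1 n3 d2 = 2" "blk n1 n3 d3 = n1"
        "yR d1 \<noteq> b" "yR d2 \<noteq> b" "yR d3 \<noteq> b" by blast
      have dd: "d1 \<noteq> d2" "d1 \<noteq> d3" "d2 \<noteq> d3" using d(4-6) n12 by metis+
      have m: "1 mod n1 + 1 = 2" "2 mod n1 + 1 = 3" "n1 mod n1 + 1 = 1" using n1 by auto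
      have "{(2,yR d1,d1),(3,yR d2,d2),(1,yR d3,d3)} \<subseteq> W"
        using lm_R[OF d(1), of n1 yR yL] lm_R[OF d(2), of n1 yR yL] lm_R[OF d(3), of n1 yR yL]
        unfolding W by (simp only: d(4-6) m insert_subset empty_subsetI simp_thms)
      moreover have "\<exists>t\<in>{(2,yR d1,d1),(3,yR d2,d2),(1,yR d3,d3)}. adj (a,b,c0) t"
        apply (rule pick3) using dd d(7-9) by auto
      ultimately show ?thesis unfolding ve by blast
    qed
  qed
  have part1: "total_dom n1 n2 n3 W" unfolding total_dom_def using sub dom by blast
  have sub2: "insert (n1+1,n2+1,n3+1) W \<subseteq> vert (n1+1) (n2+1) (n3+1)"
    using sub unfolding vert_def by auto
  have dom2: "\<exists>d\<in>insert (n1+1,n2+1,n3+1) W. adj v d" if v: "v \<in> vert (n1+1) (n2+1) (n3+1)" for v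
  proof -
    obtain a b c where ve: "v = (a,b,c)" by (cases v) auto
    show ?thesis
    proof (cases "a \<le> n1 \<and> b \<le> n2 \<and> c \<le> n3")
      case True then show ?thesis unfolding ve adj_def by auto
    next
      case False
      define v' where "v' = (if a \<le> n1 then a else 1, if b \<le> n2 then b else 1, if c \<le> n3 then c else 1)"
      have "v' \<in> vert n1 n2 n3" using v n1 n2 n13 unfolding v'_def ve vert_def by auto
      then obtain d where d: "d \<in> W" "adj v' d" using dom by blast
      have "d \<in> vert n1 n2 n3" using d(1) sub by blast
      then have "adj v d" using d(2) v unfolding v'_def ve adj_def vert_def
        by (auto split: if_splits)
      then show ?thesis using d(1) by blast
    qed
  qed
  have part2: "total_dom (n1+1) (n2+1) (n3+1) (insert (n1+1,n2+1,n3+1) W)"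
    unfolding total_dom_def using sub2 dom2 by blast
  show ?thesis using part1 part2 by blast
qed


lemma yL_odd_rng:
  assumes "3 \<le> n2" "c \<notin> Sset n1 n2 n3"
  shows "1 \<le> yL_odd n1 n2 n3 c \<and> yL_odd n1 n2 n3 c \<le> (n2-1) div 2"
proof -
  have "0 < (n2-1) div 2" using assms(1) by simp
  then show ?thesis using assms(2) unfolding yL_odd_def
    by (simp add: Suc_leI)
qed

lemma yR_odd_rng:
  assumes "3 \<le> n2" "c \<notin> (\<lambda>s. s + 1) ` Sset n1 n2 n3"
  shows "(n2-1) div 2 + 1 \<le> yR_odd n1 n2 n3 c \<and> yR_odd n1 n2 n3 c \<le> 2 * ((n2-1) div 2)"
proof -
  have "0 < (n2-1) div 2" using assms(1) by simp
  then show ?thesis using assms(2) unfolding yR_odd_def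
    by (simp add: Suc_leI)
qed

lemma yL_odd_S: "c \<in> Sset n1 n2 n3 \<Longrightarrow> yL_odd n1 n2 n3 c = n2"
  unfolding yL_odd_def by simp
lemma yR_odd_S: "c \<in> (\<lambda>s. s + 1) ` Sset n1 n2 n3 \<Longrightarrow> yR_odd n1 n2 n3 c = n2"
  unfolding yR_odd_def by simp

lemma Lpre_strict: "1 \<le> i \<Longrightarrow> i < j \<Longrightarrow> 0 < n1 \<Longrightarrow> n1 \<le> n3 \<Longrightarrow> Lpre n1 n3 i < Lpre n1 n3 j"
  using Lpre_gap[of i j n1 n3] mult_pos[of n1 n3 i] by linarith

lemma ct_exists:
  assumes n0: "0 < n1" and n13: "n1 \<le> n3" and n2: "3 \<le> n2" and k: "2 \<le> kcnt n1 n2 n3"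
    and t: "t \<in> {1..n1}"
  shows "\<exists>c. c \<in> {1..n3} \<and> blk n1 n3 c = t \<and> c \<notin> Sset n1 n2 n3"
proof -
  define f where "f = (n2 - 1) div 2"
  have f1: "1 \<le> f" using n2 unfolding f_def by simp
  have S: "Sset n1 n2 n3 = {bstart n1 n3 i | i. i \<in> {1..n1} \<and> f < mult n1 n3 i}"
    using k unfolding Sset_def f_def by simp
  show ?thesis
  proof (cases "f < mult n1 n3 t")
    case True
    have m2: "2 \<le> mult n1 n3 t" using True f1 by simp
    have "bstart n1 n3 t + 1 \<notin> Sset n1 n2 n3"
    proof
      assume "bstart n1 n3 t + 1 \<in> Sset n1 n2 n3"
      then obtain i where i: "i \<in> {1..n1}" "bstart n1 n3 t + 1 = bstart n1 n3 i"
        unfolding S by blast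
      then have e: "Lpre n1 n3 i = Lpre n1 n3 t + 1" unfolding bstart_def by simp
      show False
      proof (cases "i \<le> t")
        case True then show False using Lpre_mono[of i t n1 n3] e by simp
      next
        case False then show False using Lpre_gap[of t i n1 n3] e m2 t by simp
      qed
    qed
    then show ?thesis using second_blk[OF n0 n13 t m2] by blast
  next
    case False
    have "bstart n1 n3 t \<notin> Sset n1 n2 n3"
    proof
      assume "bstart n1 n3 t \<in> Sset n1 n2 n3"
      then obtain i where i: "i \<in> {1..n1}" "f < mult n1 n3 i" "bstart n1 n3 t = bstart n1 n3 i"
        unfolding S by blast
      then have e: "Lpre n1 n3 i = Lpre n1 n3 t" unfolding bstart_def by simp
      have "i \<noteq> t" using i(2) False by auto
      then show False
        using Lpre_strict[of i t n1 n3] Lpre_strict[of t i n1 n3] e i(1) t n0 n13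
        by (cases "i < t") auto
    qed
    then show ?thesis using bstart_blk[OF n0 n13 t] by blast
  qed
qed


theorem mainTheorem11:
  fixes n1 n2 n3 :: nat and W :: "vtx set"
  assumes "3 \<le> n1" and "3 \<le> n2" and "n1 \<le> n3" and "n2 \<le> n3"
    and "3 * max n1 n2 \<le> 2 * n3" and "2 * n3 \<le> n1 * n2"
    and "middle_cone n1 n2 n3 W"
  shows "total_dom n1 n2 n3 W \<and>
         total_dom (n1 + 1) (n2 + 1) (n3 + 1) (insert (n1 + 1, n2 + 1, n3 + 1) W)"
proof -
  have n1: "3 \<le> n1" and n2: "3 \<le> n2" and n13: "n1 \<le> n3" using assms by auto
  have n0: "0 < n1" using n1 by simp
  have n1lt: "n1 < n3" using assms(5) n1 by simp
  have n21: "1 \<le> n2" using n2 by simp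
  define d1 where "d1 = bstart n1 n3 1"
  define d2 where "d2 = bstart n1 n3 2"
  define d3 where "d3 = bstart n1 n3 n1"
  have D1: "d1 \<in> {1..n3} \<and> blk n1 n3 d1 = 1" using bstart_blk[OF n0 n13, of 1] n1 unfolding d1_def by auto
  have D2: "d2 \<in> {1..n3} \<and> blk n1 n3 d2 = 2" using bstart_blk[OF n0 n13, of 2] n1 unfolding d2_def by auto
  have D3: "d3 \<in> {1..n3} \<and> blk n1 n3 d3 = n1" using bstart_blk[OF n0 n13, of n1] n1 unfolding d3_def by auto
  define f where "f = (n2 - 1) div 2"
  have f1: "1 \<le> f" using n2 unfolding f_def by simp
  show ?thesis
  proof (cases "even n2")
    case True
    define h where "h = n2 div 2"
    have h: "1 \<le> h" "n2 = 2 * h" using True n2 unfolding h_def by auto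
    have W: "W = landmarks n1 n3 (yL_even n2) (yR_even n2)" using assms(7) True unfolding middle_cone_def by simp
    have rL: "1 \<le> yL_even n2 c \<and> yL_even n2 c \<le> h" for c
    proof -
      have "(c - 1) mod h < h" using h(1) by (intro mod_less_divisor) simp
      then show ?thesis unfolding yL_even_def h_def[symmetric] by simp
    qed
    have rR: "h + 1 \<le> yR_even n2 c \<and> yR_even n2 c \<le> n2" for c
    proof -
      have "(c - 1) mod h < h" using h(1) by (intro mod_less_divisor) simp
      then show ?thesis using h unfolding yR_even_def h_def[symmetric] by linarith
    qed
    show ?thesis
    proof (rule dom_generic[OF n1 n13 n21 W])
      show "\<forall>c\<in>{1..n3}. yL_even n2 c \<in> {1..n2} \<and> yR_even n2 c \<in> {1..n2}"
      proof
        fix c show "yL_even n2 c \<in> {1..n2} \<and> yR_even n2 c \<in> {1..n2}"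
          using rL[of c] rR[of c] h by auto
      qed
      show "\<forall>b\<in>{1..n2}. (\<exists>d1 d2 d3. d1 \<in> {1..n3} \<and> d2 \<in> {1..n3} \<and> d3 \<in> {1..n3} \<and>
        blk n1 n3 d1 = 1 \<and> blk n1 n3 d2 = 2 \<and> blk n1 n3 d3 = n1 \<and>
        yL_even n2 d1 \<noteq> b \<and> yL_even n2 d2 \<noteq> b \<and> yL_even n2 d3 \<noteq> b) \<or>
     (\<exists>d1 d2 d3. d1 \<in> {1..n3} \<and> d2 \<in> {1..n3} \<and> d3 \<in> {1..n3} \<and>
        blk n1 n3 d1 = 1 \<and> blk n1 n3 d2 = 2 \<and> blk n1 n3 d3 = n1 \<and>
        yR_even n2 d1 \<noteq> b \<and> yR_even n2 d2 \<noteq> b \<and> yR_even n2 d3 \<noteq> b)"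
      proof
        fix b assume b: "b \<in> {1..n2}"
        show "(\<exists>d1 d2 d3. d1 \<in> {1..n3} \<and> d2 \<in> {1..n3} \<and> d3 \<in> {1..n3} \<and>
        blk n1 n3 d1 = 1 \<and> blk n1 n3 d2 = 2 \<and> blk n1 n3 d3 = n1 \<and>
        yL_even n2 d1 \<noteq> b \<and> yL_even n2 d2 \<noteq> b \<and> yL_even n2 d3 \<noteq> b) \<or>
     (\<exists>d1 d2 d3. d1 \<in> {1..n3} \<and> d2 \<in> {1..n3} \<and> d3 \<in> {1..n3} \<and>
        blk n1 n3 d1 = 1 \<and> blk n1 n3 d2 = 2 \<and> blk n1 n3 d3 = n1 \<and>
        yR_even n2 d1 \<noteq> b \<and> yR_even n2 d2 \<noteq> b \<and> yR_even n2 d3 \<noteq> b)"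
        proof (cases "b \<le> h")
          case True
          then have "yR_even n2 d \<noteq> b" for d using rR[of d] by auto
          then show ?thesis using D1 D2 D3 by blast
        next
          case False
          then have "yL_even n2 d \<noteq> b" for d using rL[of d] by auto
          then show ?thesis using D1 D2 D3 by blast
        qed
      qed
    qed
  next
    case odd: False
    have n2f: "n2 = 2 * f + 1" using odd unfolding f_def by presburger
    have rR: "yR_odd n1 n2 n3 c = n2 \<or> (f + 1 \<le> yR_odd n1 n2 n3 c \<and> yR_odd n1 n2 n3 c \<le> 2 * f)" for c
      using yR_odd_rng[OF n2, of c n1 n3] yR_odd_S[of c n1 n2 n3] unfolding f_def by blast
    have rL: "yL_odd n1 n2 n3 c = n2 \<or> (1 \<le> yL_odd n1 n2 n3 c \<and> yL_odd n1 n2 n3 c \<le> f)" for c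
      using yL_odd_rng[OF n2, of c n1 n3] yL_odd_S[of c n1 n2 n3] unfolding f_def by blast
    show ?thesis
    proof (cases "2 \<le> kcnt n1 n2 n3")
      case k: True
      have W: "W = landmarks n1 n3 (yL_odd n1 n2 n3) (yR_odd n1 n2 n3)"
        using assms(7) odd k unfolding middle_cone_def by simp
      show ?thesis
      proof (rule dom_generic[OF n1 n13 n21 W])
        show "\<forall>c\<in>{1..n3}. yL_odd n1 n2 n3 c \<in> {1..n2} \<and> yR_odd n1 n2 n3 c \<in> {1..n2}"
        proof
          fix c show "yL_odd n1 n2 n3 c \<in> {1..n2} \<and> yR_odd n1 n2 n3 c \<in> {1..n2}"
            using rL[of c] rR[of c] n2f n2 by auto
        qed
        show "\<forall>b\<in>{1..n2}. (\<exists>d1 d2 d3. d1 \<in> {1..n3} \<and> d2 \<in> {1..n3} \<and> d3 \<in> {1..n3} \<and>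
          blk n1 n3 d1 = 1 \<and> blk n1 n3 d2 = 2 \<and> blk n1 n3 d3 = n1 \<and>
          yL_odd n1 n2 n3 d1 \<noteq> b \<and> yL_odd n1 n2 n3 d2 \<noteq> b \<and> yL_odd n1 n2 n3 d3 \<noteq> b) \<or>
       (\<exists>d1 d2 d3. d1 \<in> {1..n3} \<and> d2 \<in> {1..n3} \<and> d3 \<in> {1..n3} \<and>
          blk n1 n3 d1 = 1 \<and> blk n1 n3 d2 = 2 \<and> blk n1 n3 d3 = n1 \<and>
          yR_odd n1 n2 n3 d1 \<noteq> b \<and> yR_odd n1 n2 n3 d2 \<noteq> b \<and> yR_odd n1 n2 n3 d3 \<noteq> b)"
        proof
          fix b assume b: "b \<in> {1..n2}"
          show "(\<exists>d1 d2 d3. d1 \<in> {1..n3} \<and> d2 \<in> {1..n3} \<and> d3 \<in> {1..n3} \<and>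
          blk n1 n3 d1 = 1 \<and> blk n1 n3 d2 = 2 \<and> blk n1 n3 d3 = n1 \<and>
          yL_odd n1 n2 n3 d1 \<noteq> b \<and> yL_odd n1 n2 n3 d2 \<noteq> b \<and> yL_odd n1 n2 n3 d3 \<noteq> b) \<or>
       (\<exists>d1 d2 d3. d1 \<in> {1..n3} \<and> d2 \<in> {1..n3} \<and> d3 \<in> {1..n3} \<and>
          blk n1 n3 d1 = 1 \<and> blk n1 n3 d2 = 2 \<and> blk n1 n3 d3 = n1 \<and>
          yR_odd n1 n2 n3 d1 \<noteq> b \<and> yR_odd n1 n2 n3 d2 \<noteq> b \<and> yR_odd n1 n2 n3 d3 \<noteq> b)"
          proof (cases "b \<le> f")
            case True
            then have "yR_odd n1 n2 n3 d \<noteq> b" for d using rR[of d] n2f by auto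
            then show ?thesis using D1 D2 D3 by blast
          next
            case bf: False
            show ?thesis
            proof (cases "b = n2")
              case False
              then have "yL_odd n1 n2 n3 d \<noteq> b" for d using rL[of d] bf by auto
              then show ?thesis using D1 D2 D3 by blast
            next
              case bn: True
              have ct: "\<exists>c. c \<in> {1..n3} \<and> blk n1 n3 c = t \<and> yL_odd n1 n2 n3 c \<noteq> b" if tt: "t \<in> {1..n1}" for t
              proof -
                obtain c where c: "c \<in> {1..n3}" "blk n1 n3 c = t" "c \<notin> Sset n1 n2 n3"
                  using ct_exists[OF n0 n13 n2 k tt] by blast
                have "yL_odd n1 n2 n3 c \<noteq> b" using yL_odd_rng[OF n2 c(3)] bn n2f unfolding f_def by simp
                then show ?thesis using c by blast
              qed
              obtain e1 where "e1 \<in> {1..n3} \<and> blk n1 n3 e1 = 1 \<and> yL_odd n1 n2 n3 e1 \<noteq> b" using ct[of 1] n1 by auto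
              moreover obtain e2 where "e2 \<in> {1..n3} \<and> blk n1 n3 e2 = 2 \<and> yL_odd n1 n2 n3 e2 \<noteq> b" using ct[of 2] n1 by auto
              moreover obtain e3 where "e3 \<in> {1..n3} \<and> blk n1 n3 e3 = n1 \<and> yL_odd n1 n2 n3 e3 \<noteq> b" using ct[of n1] n1 by auto
              ultimately show ?thesis by blast
            qed
          qed
        qed
      qed
    next
      case k: False
      obtain z where z: "z \<in> {1..n3}" "blk n1 n3 z \<notin> {1, 2, n1}"
        and W: "W = landmarks n1 n3 ((yL_odd n1 n2 n3)(z := n2)) (yR_odd n1 n2 n3)"
        using assms(7) odd k unfolding middle_cone_def by auto
      have S1: "Sset n1 n2 n3 = {1}" using k unfolding Sset_def by simp
      let ?yL = "(yL_odd n1 n2 n3)(z := n2)"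
      have rL': "?yL c = n2 \<or> (1 \<le> ?yL c \<and> ?yL c \<le> f)" for c
        using rL[of c] by auto
      show ?thesis
      proof (rule dom_generic[OF n1 n13 n21 W])
        show "\<forall>c\<in>{1..n3}. ?yL c \<in> {1..n2} \<and> yR_odd n1 n2 n3 c \<in> {1..n2}"
        proof
          fix c show "?yL c \<in> {1..n2} \<and> yR_odd n1 n2 n3 c \<in> {1..n2}"
            using rL'[of c] rR[of c] n2f n2 by (auto simp del: fun_upd_apply)
        qed
        show "\<forall>b\<in>{1..n2}. (\<exists>d1 d2 d3. d1 \<in> {1..n3} \<and> d2 \<in> {1..n3} \<and> d3 \<in> {1..n3} \<and>
          blk n1 n3 d1 = 1 \<and> blk n1 n3 d2 = 2 \<and> blk n1 n3 d3 = n1 \<and>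
          ?yL d1 \<noteq> b \<and> ?yL d2 \<noteq> b \<and> ?yL d3 \<noteq> b) \<or>
       (\<exists>d1 d2 d3. d1 \<in> {1..n3} \<and> d2 \<in> {1..n3} \<and> d3 \<in> {1..n3} \<and>
          blk n1 n3 d1 = 1 \<and> blk n1 n3 d2 = 2 \<and> blk n1 n3 d3 = n1 \<and>
          yR_odd n1 n2 n3 d1 \<noteq> b \<and> yR_odd n1 n2 n3 d2 \<noteq> b \<and> yR_odd n1 n2 n3 d3 \<noteq> b)"
        proof
          fix b assume b: "b \<in> {1..n2}"
          show "(\<exists>d1 d2 d3. d1 \<in> {1..n3} \<and> d2 \<in> {1..n3} \<and> d3 \<in> {1..n3} \<and>
          blk n1 n3 d1 = 1 \<and> blk n1 n3 d2 = 2 \<and> blk n1 n3 d3 = n1 \<and>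
          ?yL d1 \<noteq> b \<and> ?yL d2 \<noteq> b \<and> ?yL d3 \<noteq> b) \<or>
       (\<exists>d1 d2 d3. d1 \<in> {1..n3} \<and> d2 \<in> {1..n3} \<and> d3 \<in> {1..n3} \<and>
          blk n1 n3 d1 = 1 \<and> blk n1 n3 d2 = 2 \<and> blk n1 n3 d3 = n1 \<and>
          yR_odd n1 n2 n3 d1 \<noteq> b \<and> yR_odd n1 n2 n3 d2 \<noteq> b \<and> yR_odd n1 n2 n3 d3 \<noteq> b)"
          proof (cases "b \<le> f")
            case True
            then have "yR_odd n1 n2 n3 d \<noteq> b" for d using rR[of d] n2f by auto
            then show ?thesis using D1 D2 D3 by blast
          next
            case bf: False
            show ?thesis
            proof (cases "b = n2")
              case False
              then have "?yL d \<noteq> b" for d using rL'[of d] bf by (auto simp del: fun_upd_apply)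
              then show ?thesis using D1 D2 D3 by blast
            next
              case bn: True
              have m1: "2 \<le> mult n1 n3 1" using mult1[OF n0 n1lt] .
              have E1: "2 \<in> {1..n3} \<and> blk n1 n3 2 = 1"
              proof -
                have "blk n1 n3 2 = 1" by (rule blk_eq) (use m1 n1 Lpre_1[of n1 n3] in auto)
                then show ?thesis using n1 n13 by simp
              qed
              have d2ge: "3 \<le> d2" using m1 Lpre_Suc[of 1 n1 n3] Lpre_1[of n1 n3] unfolding d2_def bstart_def by (simp add: numeral_2_eq_2)
              have d3ge: "d2 \<le> d3" using Lpre_mono[of 2 n1 n1 n3] n1 unfolding d2_def d3_def bstart_def by simp
              have good: "?yL d \<noteq> b" if "d \<noteq> z" "d \<noteq> 1" for d
              proof -
                have "d \<notin> Sset n1 n2 n3" using that S1 by simp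
                then show ?thesis using yL_odd_rng[OF n2, of d n1 n3] that bn n2f unfolding f_def by simp
              qed
              have "2 \<noteq> z" using E1 z by auto
              moreover have "d2 \<noteq> z" using D2 z by auto
              moreover have "d3 \<noteq> z" using D3 z by auto
              ultimately have "?yL 2 \<noteq> b" "?yL d2 \<noteq> b" "?yL d3 \<noteq> b"
                using good d2ge d3ge by (auto simp del: fun_upd_apply)
              then show ?thesis using E1 D2 D3 by blast
            qed
          qed
        qed
      qed
    qed
  qed
qed

end
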